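(* Let $X$ be a metric space with an accumulation point. Then: (i) there is a sequence $x\in X^{[\omega]^2}$ with $\Lambda_x(\mathsf{r})\neq\Gamma_x(\mathsf{r})$; (ii) there is a sequence $x\in X^{[\omega]^2}$ such that $\Lambda_x(\mathsf{r})$ is not closed; (iii) if $X$ is locally compact, then for every $x\in X^{[\omega]^2}$ each isolated point of $\Gamma_x(\mathsf{r})$ belongs to $\Lambda_x(\mathsf{r})$. Similarly: (i$'$) there is a sequence $x\in X^{\omega}$ with $\Lambda_x(\mathrm{FS})\neq\Gamma_x(\mathrm{FS})$; (ii$'$) there is a sequence $x\in X^{\omega}$ such that $\Lambda_x(\mathrm{FS})$ is not closed; (iii$'$) if $X$ is locally compact, then for every $x\in X^{\omega}$ each isolated point of $\Gamma_x(\mathrm{FS})$ belongs to $\Lambda_x(\mathrm{FS})$.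
   Context: $\omega$ is the set of nonnegative integers, $[D]^2$ the 2-element subsets of $D$, $[D]^\omega$ the infinite subsets. Let $\mathsf{r}:[\omega]^\omega\to[[\omega]^2]^\omega$, $\mathsf{r}(D)=[D]^2$, and $\mathrm{FS}:[\omega]^\omega\to[\omega]^\omega$, $\mathrm{FS}(D)=\{\sum_{n\in\alpha}n:\alpha\subseteq D\text{ finite nonempty}\}$. For $\rho\in\{\mathsf{r},\mathrm{FS}\}$ with domain $[\omega]^\omega$ and codomain consisting of infinite subsets of $\Psi$ (where $\Psi=[\omega]^2$ for $\mathsf{r}$, $\Psi=\omega$ for $\mathrm{FS}$), and a sequence $x:\Psi\to X$: $\Gamma_x(\rho)$ is the set of $\eta\in X$ such that for every neighborhood $U$ of $\eta$ there is an infinite $F\subseteq\omega$ with $\rho(F)\subseteq\{s\in\Psi:x_s\in U\}$; $\Lambda_x(\rho)$ is the set of $\eta\in X$ for which there is an infinite $F\subseteq\omega$ such that for every neighborhood $U$ of $\eta$ there is a finite $K\subseteq\omega$ with $x_s\in U$ for all $s\in\rho(F\setminus K)$. *)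

theory Defs
  imports "HOL-Analysis.Analysis"
begin

text \<open>[D]^2: the 2-element subsets of D.  r(D) = [D]^2.\<close>
definition pairs :: "nat set \<Rightarrow> nat set set" where
  "pairs D = {s. s \<subseteq> D \<and> card s = 2}"

definition FS :: "nat set \<Rightarrow> nat set" where
  "FS D = {\<Sum>\<alpha> | \<alpha>. \<alpha> \<subseteq> D \<and> finite \<alpha> \<and> \<alpha> \<noteq> {}}"

definition Gamma :: "(nat set \<Rightarrow> 'b set) \<Rightarrow> ('b \<Rightarrow> 'a::topological_space) \<Rightarrow> 'a set" where
  "Gamma \<rho> x = {\<eta>. \<forall>U. open U \<and> \<eta> \<in> U \<longrightarrow>
      (\<exists>F. infinite F \<and> \<rho> F \<subseteq> {s. x s \<in> U})}"

definition Lambda :: "(nat set \<Rightarrow> 'b set) \<Rightarrow> ('b \<Rightarrow> 'a::topological_space) \<Rightarrow> 'a set" where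
  "Lambda \<rho> x = {\<eta>. \<exists>F. infinite F \<and> (\<forall>U. open U \<and> \<eta> \<in> U \<longrightarrow>
      (\<exists>K. finite K \<and> (\<forall>s \<in> \<rho> (F - K). x s \<in> U)))}"

end

theory Submission
  imports Defs
begin


definition ultra :: "nat set set \<Rightarrow> bool" where
  "ultra p \<longleftrightarrow> {} \<notin> p \<and> (\<forall>A B. A \<in> p \<longrightarrow> B \<in> p \<longrightarrow> A \<inter> B \<in> p)
     \<and> (\<forall>A B. A \<in> p \<longrightarrow> A \<subseteq> B \<longrightarrow> B \<in> p) \<and> (\<forall>A. A \<in> p \<or> - A \<in> p)"

definition fip :: "'a set set \<Rightarrow> bool" where
  "fip G \<longleftrightarrow> (\<forall>H. finite H \<longrightarrow> H \<subseteq> G \<longrightarrow> \<Inter>H \<noteq> {})"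

lemma ultra_mono: "ultra p \<Longrightarrow> A \<in> p \<Longrightarrow> A \<subseteq> B \<Longrightarrow> B \<in> p"
  unfolding ultra_def by blast
lemma ultra_Int: "ultra p \<Longrightarrow> A \<in> p \<Longrightarrow> B \<in> p \<Longrightarrow> A \<inter> B \<in> p"
  unfolding ultra_def by blast
lemma ultra_empty: "ultra p \<Longrightarrow> {} \<notin> p"
  unfolding ultra_def by blast
lemma ultra_compl: "ultra p \<Longrightarrow> (- A \<in> p) \<longleftrightarrow> A \<notin> p"
proof -
  assume u: "ultra p"
  have "A \<inter> - A = {}" by auto
  then show ?thesis using ultra_Int[OF u, of A "-A"] ultra_empty[OF u] u unfolding ultra_def by auto
qed
lemma ultra_UNIV: "ultra p \<Longrightarrow> UNIV \<in> p"
  unfolding ultra_def by blast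
lemma ultra_Un: "ultra p \<Longrightarrow> A \<union> B \<in> p \<Longrightarrow> A \<in> p \<or> B \<in> p"
proof (rule ccontr)
  assume u: "ultra p" and ab: "A \<union> B \<in> p" and n: "\<not> (A \<in> p \<or> B \<in> p)"
  hence "-A \<in> p" "-B \<in> p" using ultra_compl[OF u] by auto
  hence "-A \<inter> -B \<inter> (A \<union> B) \<in> p" using ultra_Int[OF u] ab by blast
  moreover have "-A \<inter> -B \<inter> (A \<union> B) = {}" by auto
  ultimately show False using ultra_empty[OF u] by simp
qed
lemma ultra_Inter: assumes u: "ultra p" shows "finite H \<Longrightarrow> H \<subseteq> p \<Longrightarrow> \<Inter>H \<in> p"
proof (induction H rule: finite_induct)
  case empty then show ?case using ultra_UNIV[OF u] by simp
next
  case (insert x F) then show ?case using ultra_Int[OF u] by simp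
qed
lemma ultra_subset_eq: assumes u: "ultra p" "ultra q" "p \<subseteq> q" shows "p = q"
proof (intro subset_antisym subsetI)
  fix A assume "A \<in> q"
  show "A \<in> p"
  proof (rule ccontr)
    assume "A \<notin> p" then have "-A \<in> q" using ultra_compl[OF u(1)] u(3) by blast
    then show False using ultra_compl[OF u(2)] \<open>A \<in> q\<close> by blast
  qed
qed (use u in blast)
lemma ultra_fip: "ultra p \<Longrightarrow> fip p"
  unfolding fip_def
proof (intro allI impI)
  fix H assume "ultra p" "finite H" "H \<subseteq> p"
  then have "\<Inter>H \<in> p" using ultra_Inter by blast
  then show "\<Inter>H \<noteq> {}" using ultra_empty[OF \<open>ultra p\<close>] by auto
qed
lemma fip_mono: "fip G \<Longrightarrow> H \<subseteq> G \<Longrightarrow> fip H"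
  unfolding fip_def by blast

lemma ultra_exists:
  assumes "fip A"
  shows "\<exists>p. ultra p \<and> A \<subseteq> p"
proof -
  let ?S = "{G. A \<subseteq> G \<and> fip G}"
  have "\<forall>C\<in>chains ?S. \<exists>U\<in>?S. \<forall>X\<in>C. X \<subseteq> U"
  proof
    fix C assume C: "C \<in> chains ?S"
    show "\<exists>U\<in>?S. \<forall>X\<in>C. X \<subseteq> U"
    proof (cases "C = {}")
      case True then show ?thesis using assms by auto
    next
      case False
      have "fip (\<Union>C)"
        unfolding fip_def
      proof (intro allI impI)
        fix H assume H: "finite H" "H \<subseteq> \<Union>C"
        obtain B where "B \<in> C" "H \<subseteq> B"
          using finite_subset_Union_chain[OF H False] C
          by (metis chains_alt_def mem_Collect_eq)
        then show "\<Inter>H \<noteq> {}" using C H unfolding chains_def fip_def by blast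
      qed
      moreover have "A \<subseteq> \<Union>C" using False C unfolding chains_def by blast
      ultimately show ?thesis by blast
    qed
  qed
  from Zorn_Lemma2[OF this] obtain M where M: "M \<in> ?S" and max: "\<forall>X\<in>?S. M \<subseteq> X \<longrightarrow> X = M"
    by blast
  have add: "B \<in> M" if "fip (insert B M)" for B
    using max M that by blast
  have fipM: "fip M" using M by blast
  have "ultra M"
    unfolding ultra_def
  proof (intro conjI allI impI)
    show "{} \<notin> M" using fipM[unfolded fip_def, rule_format, of "{{}}"] by auto
  next
    fix X Y assume X: "X \<in> M" and Y: "Y \<in> M"
    show "X \<inter> Y \<in> M"
    proof (rule add)
      show "fip (insert (X \<inter> Y) M)"
        unfolding fip_def
      proof (intro allI impI)
        fix H assume H: "finite H" "H \<subseteq> insert (X \<inter> Y) M"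
        have "\<Inter>(insert X (insert Y (H - {X \<inter> Y}))) \<subseteq> \<Inter>H" by auto
        moreover have "\<Inter>(insert X (insert Y (H - {X \<inter> Y}))) \<noteq> {}"
          using fipM[unfolded fip_def, rule_format, of "insert X (insert Y (H - {X \<inter> Y}))"] H X Y by auto
        ultimately show "\<Inter>H \<noteq> {}" by blast
      qed
    qed
  next
    fix X Y assume X: "X \<in> M" and XY: "X \<subseteq> Y"
    show "Y \<in> M"
    proof (rule add)
      show "fip (insert Y M)"
        unfolding fip_def
      proof (intro allI impI)
        fix H assume H: "finite H" "H \<subseteq> insert Y M"
        have "\<Inter>(insert X (H - {Y})) \<subseteq> \<Inter>H" using XY by auto
        moreover have "\<Inter>(insert X (H - {Y})) \<noteq> {}"
          using fipM[unfolded fip_def, rule_format, of "insert X (H - {Y})"] H X by auto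
        ultimately show "\<Inter>H \<noteq> {}" by blast
      qed
    qed
  next
    fix X
    show "X \<in> M \<or> - X \<in> M"
    proof (rule ccontr)
      assume n: "\<not> (X \<in> M \<or> - X \<in> M)"
      hence "\<not> fip (insert X M)" "\<not> fip (insert (-X) M)" using add by blast+
      then obtain H1 H2 where H1: "finite H1" "H1 \<subseteq> insert X M" "\<Inter>H1 = {}"
        and H2: "finite H2" "H2 \<subseteq> insert (-X) M" "\<Inter>H2 = {}"
        unfolding fip_def by blast
      let ?H = "(H1 - {X}) \<union> (H2 - {-X})"
      have "\<Inter>?H \<noteq> {}" using fipM[unfolded fip_def, rule_format, of ?H] H1 H2 by auto
      then obtain z where z: "z \<in> \<Inter>?H" by blast
      show False
      proof (cases "z \<in> X")
        case True
        hence "z \<in> \<Inter>H1" using z by auto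
        thus False using H1 by simp
      next
        case False
        hence "z \<in> \<Inter>H2" using z by auto
        thus False using H2 by simp
      qed
    qed
  qed
  thus ?thesis using M by blast
qed



definition shiftn :: "nat set \<Rightarrow> nat \<Rightarrow> nat set" where "shiftn A n = {m. n + m \<in> A}"
definition upl :: "nat set set \<Rightarrow> nat set set \<Rightarrow> nat set set" where
  "upl p q = {A. {n. shiftn A n \<in> q} \<in> p}"
definition ucl :: "nat set set \<Rightarrow> nat set set set" where
  "ucl G = {p. ultra p \<and> G \<subseteq> p}"
definition usemi :: "nat set set set \<Rightarrow> bool" where
  "usemi S \<longleftrightarrow> (\<forall>p\<in>S. \<forall>q\<in>S. upl p q \<in> S)"

lemma ultra_upl: assumes p: "ultra p" and q: "ultra q" shows "ultra (upl p q)"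
  unfolding ultra_def
proof (intro conjI allI impI)
  have "{n. shiftn {} n \<in> q} = {}" using ultra_empty[OF q] by (simp add: shiftn_def)
  then show "{} \<notin> upl p q" using ultra_empty[OF p] by (simp add: upl_def)
next
  fix A B assume "A \<in> upl p q" "B \<in> upl p q"
  then have "{n. shiftn A n \<in> q} \<inter> {n. shiftn B n \<in> q} \<in> p" using ultra_Int[OF p] by (simp add: upl_def)
  moreover have "{n. shiftn A n \<in> q} \<inter> {n. shiftn B n \<in> q} \<subseteq> {n. shiftn (A \<inter> B) n \<in> q}"
  proof
    fix n assume "n \<in> {n. shiftn A n \<in> q} \<inter> {n. shiftn B n \<in> q}"
    then have "shiftn A n \<inter> shiftn B n \<in> q" using ultra_Int[OF q] by auto
    moreover have "shiftn A n \<inter> shiftn B n = shiftn (A \<inter> B) n" by (auto simp: shiftn_def)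
    ultimately show "n \<in> {n. shiftn (A \<inter> B) n \<in> q}" by simp
  qed
  ultimately show "A \<inter> B \<in> upl p q" using ultra_mono[OF p] by (simp add: upl_def)
next
  fix A B assume "A \<in> upl p q" "A \<subseteq> B"
  moreover have "{n. shiftn A n \<in> q} \<subseteq> {n. shiftn B n \<in> q}"
  proof
    fix n assume "n \<in> {n. shiftn A n \<in> q}"
    moreover have "shiftn A n \<subseteq> shiftn B n" using \<open>A \<subseteq> B\<close> by (auto simp: shiftn_def)
    ultimately show "n \<in> {n. shiftn B n \<in> q}" using ultra_mono[OF q] by auto
  qed
  ultimately show "B \<in> upl p q" using ultra_mono[OF p] by (simp add: upl_def)
next
  fix A
  have "shiftn (-A) n = - shiftn A n" for n by (auto simp: shiftn_def)
  then have "{n. shiftn (-A) n \<in> q} = - {n. shiftn A n \<in> q}" using ultra_compl[OF q] by auto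
  then show "A \<in> upl p q \<or> - A \<in> upl p q" using ultra_compl[OF p] by (auto simp: upl_def)
qed

lemma upl_assoc: "upl (upl p q) r = upl p (upl q r)"
proof -
  have "shiftn {n. shiftn A n \<in> r} k = {l. shiftn (shiftn A k) l \<in> r}" for A k
    by (simp add: shiftn_def add.assoc)
  then show ?thesis by (simp add: upl_def)
qed

lemma ucl_compact:
  assumes "\<And>F. finite F \<Longrightarrow> F \<subseteq> S \<Longrightarrow> ucl (\<Union>F) \<noteq> {}"
  shows "ucl (\<Union>S) \<noteq> {}"
proof -
  have "fip (\<Union>S)"
    unfolding fip_def
  proof (intro allI impI)
    fix H assume H: "finite H" "H \<subseteq> \<Union>S"
    then have "\<forall>h\<in>H. \<exists>X. X \<in> S \<and> h \<in> X" by blast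
    from bchoice[OF this] obtain f where f: "\<forall>h\<in>H. f h \<in> S \<and> h \<in> f h" by blast
    have "finite (f ` H)" "f ` H \<subseteq> S" using H f by auto
    then obtain p where p: "p \<in> ucl (\<Union>(f ` H))" using assms by blast
    then have "ultra p" "H \<subseteq> p" using f by (auto simp: ucl_def)
    then show "\<Inter>H \<noteq> {}" using ultra_fip H unfolding fip_def by blast
  qed
  then show ?thesis using ultra_exists by (auto simp: ucl_def)
qed

lemma chain_max:
  assumes "C \<in> chains Z" "finite F" "F \<subseteq> C" "F \<noteq> {}"
  shows "\<exists>B\<in>C. \<forall>X\<in>F. X \<subseteq> B"
  using assms(2,4,3)
proof (induction F rule: finite_ne_induct)
  case (singleton x) then show ?case by auto
next
  case (insert x F)
  then obtain B where B: "B \<in> C" "\<forall>X\<in>F. X \<subseteq> B" by auto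
  have "x \<in> C" using insert by auto
  then have "x \<subseteq> B \<or> B \<subseteq> x" using chainsD[OF assms(1)] B by blast
  then show ?case using B \<open>x \<in> C\<close> by blast
qed

lemma ellis:
  assumes ne: "ucl A0 \<noteq> {}" and sg: "usemi (ucl A0)"
  shows "\<exists>e\<in>ucl A0. upl e e = e"
proof -
  let ?Z = "{A. A0 \<subseteq> A \<and> ucl A \<noteq> {} \<and> usemi (ucl A)}"
  have "\<forall>C\<in>chains ?Z. \<exists>U\<in>?Z. \<forall>X\<in>C. X \<subseteq> U"
  proof
    fix C assume C: "C \<in> chains ?Z"
    show "\<exists>U\<in>?Z. \<forall>X\<in>C. X \<subseteq> U"
    proof (cases "C = {}")
      case True then show ?thesis using ne sg by auto
    next
      case False
      have CZ: "C \<subseteq> ?Z" using C by (simp add: chains_def)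
      have "ucl (\<Union>C) \<noteq> {}"
      proof (rule ucl_compact)
        fix F assume F: "finite F" "F \<subseteq> C"
        show "ucl (\<Union>F) \<noteq> {}"
        proof (cases "F = {}")
          case True
          obtain X where "X \<in> C" using False by blast
          then have "ucl X \<noteq> {}" using CZ by auto
          then show ?thesis using True by (auto simp: ucl_def)
        next
          case nF: False
          obtain B where B: "B \<in> C" "\<forall>X\<in>F. X \<subseteq> B" using chain_max[OF C F nF] by blast
          then have "ucl B \<noteq> {}" using CZ by auto
          moreover have "ucl B \<subseteq> ucl (\<Union>F)" using B by (auto simp: ucl_def)
          ultimately show ?thesis by blast
        qed
      qed
      moreover have "usemi (ucl (\<Union>C))"
        unfolding usemi_def
      proof (intro ballI)
        fix p q assume pq: "p \<in> ucl (\<Union>C)" "q \<in> ucl (\<Union>C)"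
        have "X \<subseteq> upl p q" if "X \<in> C" for X
        proof -
          have "p \<in> ucl X" "q \<in> ucl X" using pq that by (auto simp: ucl_def)
          then show ?thesis using CZ that unfolding usemi_def ucl_def by blast
        qed
        then show "upl p q \<in> ucl (\<Union>C)" using pq ultra_upl by (auto simp: ucl_def)
      qed
      moreover have "A0 \<subseteq> \<Union>C" using False CZ by blast
      ultimately show ?thesis by blast
    qed
  qed
  from Zorn_Lemma2[OF this] obtain MA where MA: "MA \<in> ?Z" and max: "\<forall>X\<in>?Z. MA \<subseteq> X \<longrightarrow> X = MA"
    by blast
  define M where "M = ucl MA"
  have Mne: "M \<noteq> {}" and Msg: "usemi M" and MA0: "M \<subseteq> ucl A0" using MA by (auto simp: M_def ucl_def)
  have minimal: "ucl N = M" if "ucl N \<noteq> {}" "usemi (ucl N)" "ucl N \<subseteq> M" for N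
  proof -
    have eq: "ucl (MA \<union> N) = ucl N" using that(3) by (auto simp: ucl_def M_def)
    then have "MA \<union> N \<in> ?Z" using that MA by auto
    then have "MA \<union> N = MA" using max by blast
    then show ?thesis using eq by (simp add: M_def)
  qed
  obtain e where e: "e \<in> M" using Mne by blast
  have ue: "ultra e" using e by (simp add: M_def ucl_def)
  have uM: "ultra q" if "q \<in> M" for q using that by (simp add: M_def ucl_def)
  \<comment> \<open>step 1: M + e = M\<close>
  define N1 where "N1 = {A. \<forall>q\<in>M. A \<in> upl q e}"
  have N1eq: "ucl N1 = (\<lambda>q. upl q e) ` M"
  proof (intro subset_antisym subsetI)
    fix r assume "r \<in> (\<lambda>q. upl q e) ` M"
    then show "r \<in> ucl N1" using ultra_upl uM ue by (auto simp: N1_def ucl_def)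
  next
    fix r assume r: "r \<in> ucl N1"
    have ur: "ultra r" using r by (simp add: ucl_def)
    let ?g = "\<lambda>A. {{n. shiftn A n \<in> e}}"
    let ?S = "insert MA (?g ` r)"
    have "ucl (\<Union>?S) \<noteq> {}"
    proof (rule ucl_compact)
      fix F assume F: "finite F" "F \<subseteq> ?S"
      then have "F - {MA} \<subseteq> ?g ` r" by auto
      then obtain R where R: "R \<subseteq> r" "finite R" "F - {MA} = ?g ` R"
        using finite_subset_image[of "F - {MA}" ?g r] F by auto
      define A where "A = \<Inter>R"
      have "A \<in> r" using ultra_Inter[OF ur] R by (simp add: A_def)
      have "\<exists>q\<in>M. A \<in> upl q e"
      proof (rule ccontr)
        assume nq: "\<not> ?thesis"
        have "-A \<in> upl q e" if "q \<in> M" for q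
        proof -
          have "ultra (upl q e)" by (rule ultra_upl[OF uM[OF that] ue])
          moreover have "A \<notin> upl q e" using nq that by blast
          ultimately show ?thesis using ultra_compl by blast
        qed
        then have "\<forall>q\<in>M. -A \<in> upl q e" by blast
        then have "-A \<in> N1" by (simp add: N1_def)
        then have "-A \<in> r" using r by (auto simp: ucl_def)
        then show False using ultra_compl[OF ur] \<open>A \<in> r\<close> by blast
      qed
      then obtain q where q: "q \<in> M" "A \<in> upl q e" by blast
      have "A' \<in> upl q e" if "A' \<in> R" for A'
        using ultra_mono[OF ultra_upl[OF uM[OF q(1)] ue] q(2)] that by (auto simp: A_def)
      then have sub: "{n. shiftn A' n \<in> e} \<in> q" if "A' \<in> R" for A'
        using that by (simp add: upl_def)
      have "MA \<subseteq> q" using q(1) by (simp add: M_def ucl_def)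
      have "\<Union>F \<subseteq> q"
      proof
        fix X assume "X \<in> \<Union>F"
        then obtain Y where Y: "Y \<in> F" "X \<in> Y" by blast
        show "X \<in> q"
        proof (cases "Y = MA")
          case True then show ?thesis using Y \<open>MA \<subseteq> q\<close> by blast
        next
          case False
          then have "Y \<in> ?g ` R" using Y R(3) by blast
          then show ?thesis using Y sub by blast
        qed
      qed
      then show "ucl (\<Union>F) \<noteq> {}" using uM[OF q(1)] by (auto simp: ucl_def)
    qed
    then obtain q where q: "ultra q" "\<Union>?S \<subseteq> q" by (auto simp: ucl_def)
    have "q \<in> M" using q by (auto simp: M_def ucl_def)
    moreover have "r \<subseteq> upl q e" using q by (auto simp: upl_def)
    then have "r = upl q e" using ultra_subset_eq ur ultra_upl[OF q(1) ue] by blast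
    ultimately show "r \<in> (\<lambda>q. upl q e) ` M" by blast
  qed
  have "ucl N1 = M"
  proof (rule minimal)
    show "ucl N1 \<noteq> {}" using N1eq e by auto
    show "ucl N1 \<subseteq> M" using N1eq Msg e unfolding usemi_def by auto
    show "usemi (ucl N1)"
      unfolding usemi_def N1eq
    proof (intro ballI)
      fix a b assume "a \<in> (\<lambda>q. upl q e) ` M" "b \<in> (\<lambda>q. upl q e) ` M"
      then obtain q q' where qq: "q \<in> M" "q' \<in> M" "a = upl q e" "b = upl q' e" by blast
      have "upl a b = upl (upl a q') e" using qq by (simp add: upl_assoc)
      moreover have "upl a q' \<in> M" using qq Msg e unfolding usemi_def by auto
      ultimately show "upl a b \<in> (\<lambda>q. upl q e) ` M" by blast
    qed
  qed
  define N2 where "N2 = MA \<union> {{n. shiftn A n \<in> e} | A. A \<in> e}"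
  have N2eq: "ucl N2 = {q \<in> M. upl q e = e}"
  proof (intro subset_antisym subsetI)
    fix q assume q: "q \<in> ucl N2"
    then have "q \<in> M" by (auto simp: N2_def M_def ucl_def)
    moreover have "e \<subseteq> upl q e" using q by (auto simp: N2_def ucl_def upl_def)
    then have "e = upl q e" using ultra_subset_eq ue ultra_upl uM \<open>q \<in> M\<close> by blast
    ultimately show "q \<in> {q \<in> M. upl q e = e}" by simp
  next
    fix q assume q: "q \<in> {q \<in> M. upl q e = e}"
    then have "e \<subseteq> upl q e" by simp
    then show "q \<in> ucl N2" using q by (auto simp: N2_def M_def ucl_def upl_def)
  qed
  have "ucl N2 = M"
  proof (rule minimal)
    have "e \<in> (\<lambda>q. upl q e) ` M" using N1eq \<open>ucl N1 = M\<close> e by simp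
    then obtain q where "q \<in> M" "upl q e = e" by blast
    then show "ucl N2 \<noteq> {}" using N2eq by blast
    show "ucl N2 \<subseteq> M" using N2eq by auto
    show "usemi (ucl N2)"
      unfolding usemi_def N2eq
    proof (intro ballI)
      fix a b assume "a \<in> {q \<in> M. upl q e = e}" "b \<in> {q \<in> M. upl q e = e}"
      then show "upl a b \<in> {q \<in> M. upl q e = e}" using Msg unfolding usemi_def
        by (simp add: upl_assoc)
    qed
  qed
  then have "upl e e = e" using e N2eq by auto
  then show ?thesis using e MA0 by blast
qed



lemma FS_elem: "a \<in> D \<Longrightarrow> a \<in> FS D"
  unfolding FS_def by (rule CollectI, rule exI[of _ "{a}"]) simp

lemma FS_ge: "FS (D \<inter> {k..}) \<subseteq> {k..}"
proof
  fix n assume "n \<in> FS (D \<inter> {k..})"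
  then obtain a where a: "a \<subseteq> D \<inter> {k..}" "finite a" "a \<noteq> {}" "n = \<Sum>a" unfolding FS_def by blast
  then obtain i where "i \<in> a" by blast
  then have "i \<le> \<Sum>a" using a(2) member_le_sum[of i a "\<lambda>x. x"] by auto
  then show "n \<in> {k..}" using a \<open>i \<in> a\<close> by auto
qed

lemma FS_shift:
  assumes "n \<in> FS (D \<inter> {k..})"
  shows "\<exists>j. FS (D \<inter> {j..}) \<subseteq> shiftn (FS (D \<inter> {k..})) n"
proof -
  obtain a where a: "a \<subseteq> D \<inter> {k..}" "finite a" "a \<noteq> {}" "n = \<Sum>a" using assms unfolding FS_def by blast
  let ?j = "Suc (Max a)"
  have "FS (D \<inter> {?j..}) \<subseteq> shiftn (FS (D \<inter> {k..})) n"
  proof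
    fix m assume "m \<in> FS (D \<inter> {?j..})"
    then obtain b where b: "b \<subseteq> D \<inter> {?j..}" "finite b" "b \<noteq> {}" "m = \<Sum>b" unfolding FS_def by blast
    have dis: "a \<inter> b = {}"
    proof (rule ccontr)
      assume "a \<inter> b \<noteq> {}" then obtain i where "i \<in> a" "i \<in> b" by blast
      then have "i \<le> Max a" "i \<ge> Suc (Max a)" using a(2) b(1) by auto
      then show False by simp
    qed
    have "n + m = \<Sum>(a \<union> b)" using a b dis by (simp add: sum.union_disjoint)
    moreover have "a \<union> b \<subseteq> D \<inter> {k..}"
    proof -
      obtain i where "i \<in> a" using a by blast
      then have "k \<le> Max a" using a by (meson IntD2 Max_ge atLeast_iff le_trans subsetD)
      then show ?thesis using a(1) b(1) by auto
    qed
    ultimately have "n + m \<in> FS (D \<inter> {k..})" unfolding FS_def using a b by blast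
    then show "m \<in> shiftn (FS (D \<inter> {k..})) n" by (simp add: shiftn_def)
  qed
  then show ?thesis by blast
qed

lemma idem_exists:
  assumes inf: "infinite F0"
  shows "\<exists>p. ultra p \<and> upl p p = p \<and> FS F0 \<in> p \<and> (\<forall>A\<in>p. infinite A)"
proof -
  define D where "D k = FS (F0 \<inter> {k..})" for k
  have fipD: "fip (range D)"
    unfolding fip_def
  proof (intro allI impI)
    fix H assume H: "finite H" "H \<subseteq> range D"
    then obtain I where I: "finite I" "H = D ` I" using finite_subset_image[of H D UNIV] by auto
    obtain f where f: "f \<in> F0" "f \<ge> Max (insert 0 I)"
      using inf by (meson infinite_nat_iff_unbounded_le)
    have "f \<in> D k" if "k \<in> I" for k
    proof -
      have "k \<le> f" using f that I(1) by (meson Max_ge finite_insert insertI2 le_trans)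
      then show ?thesis unfolding D_def by (intro FS_elem) (use f in auto)
    qed
    then have "f \<in> \<Inter>H" using I by auto
    then show "\<Inter>H \<noteq> {}" by blast
  qed
  have ne: "ucl (range D) \<noteq> {}" using ultra_exists[OF fipD] by (auto simp: ucl_def)
  have sg: "usemi (ucl (range D))"
    unfolding usemi_def
  proof (intro ballI)
    fix p q assume p: "p \<in> ucl (range D)" and q: "q \<in> ucl (range D)"
    have up: "ultra p" and uq: "ultra q" using p q by (auto simp: ucl_def)
    have "D k \<in> upl p q" for k
    proof -
      have "D k \<subseteq> {n. shiftn (D k) n \<in> q}"
      proof
        fix n assume "n \<in> D k"
        then obtain j where "D j \<subseteq> shiftn (D k) n" using FS_shift unfolding D_def by blast
        moreover have "D j \<in> q" using q by (auto simp: ucl_def)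
        ultimately show "n \<in> {n. shiftn (D k) n \<in> q}" using ultra_mono[OF uq] by blast
      qed
      moreover have "D k \<in> p" using p by (auto simp: ucl_def)
      ultimately show ?thesis using ultra_mono[OF up] by (simp add: upl_def)
    qed
    then show "upl p q \<in> ucl (range D)" using ultra_upl[OF up uq] by (auto simp: ucl_def)
  qed
  obtain e where e: "e \<in> ucl (range D)" "upl e e = e" using ellis[OF ne sg] by blast
  have ue: "ultra e" using e by (simp add: ucl_def)
  have De: "D k \<in> e" for k using e by (auto simp: ucl_def)
  have "FS F0 \<in> e" using De[of 0] by (simp add: D_def)
  moreover have "infinite A" if "A \<in> e" for A
  proof
    assume "finite A"
    then obtain k where k: "A \<subseteq> {..<k}" using finite_nat_bounded by blast
    have "A \<inter> D k \<in> e" using ultra_Int[OF ue that De] .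
    moreover have "A \<inter> D k \<subseteq> {..<k} \<inter> {k..}" using k FS_ge[of F0 k] unfolding D_def by blast
    moreover have "{..<k} \<inter> {k..} = ({}::nat set)" by auto
    ultimately show False using ultra_empty[OF ue] by (metis subset_empty)
  qed
  ultimately show ?thesis using ue e by blast
qed

definition ustar :: "nat set set \<Rightarrow> nat set \<Rightarrow> nat set" where
  "ustar p A = {n \<in> A. shiftn A n \<in> p}"

lemma ustar_in:
  assumes u: "ultra p" and idem: "upl p p = p" and A: "A \<in> p"
  shows "ustar p A \<in> p"
proof -
  have "A \<in> upl p p" using A idem by simp
  then have "{n. shiftn A n \<in> p} \<in> p" by (simp add: upl_def)
  then have "A \<inter> {n. shiftn A n \<in> p} \<in> p" using ultra_Int[OF u A] by blast
  moreover have "A \<inter> {n. shiftn A n \<in> p} = ustar p A" by (auto simp: ustar_def)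
  ultimately show ?thesis by simp
qed

lemma ustar_good:
  assumes u: "ultra p" and idem: "upl p p = p" and A: "A \<in> p" and n: "n \<in> ustar p A"
  shows "shiftn (ustar p A) n \<in> p"
proof -
  have "shiftn (ustar p A) n = ustar p (shiftn A n)"
    by (auto simp: ustar_def shiftn_def add.assoc)
  moreover have "shiftn A n \<in> p" using n by (simp add: ustar_def)
  ultimately show ?thesis using ustar_in[OF u idem] by simp
qed

lemma galvin_glazer:
  assumes u: "ultra p" and idem: "upl p p = p" and inf: "\<forall>B\<in>p. infinite B"
    and A: "\<forall>m. A m \<in> p" and dec: "\<forall>m. A (Suc m) \<subseteq> A m"
  shows "\<exists>F. infinite F \<and> (\<forall>m. \<exists>K. finite K \<and> FS (F - K) \<subseteq> A m)"
proof -
  define good where "good C \<longleftrightarrow> C \<in> p \<and> (\<forall>m\<in>C. shiftn C m \<in> p)" for C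
  have star_good: "good (ustar p B)" if "B \<in> p" for B
    unfolding good_def using ustar_in[OF u idem that] ustar_good[OF u idem that] by blast
  define P where "P n x \<longleftrightarrow> good (snd x) \<and> snd x \<subseteq> A n \<and> fst x \<in> snd x" for n :: nat and x :: "nat \<times> nat set"
  define Q where "Q n x y \<longleftrightarrow> fst x < fst y \<and> snd y \<subseteq> snd x \<and> snd y \<subseteq> shiftn (snd x) (fst x)"
    for n :: nat and x y :: "nat \<times> nat set"
  have "\<exists>f. \<forall>n. P n (f n) \<and> Q n (f n) (f (Suc n))"
  proof (rule dependent_nat_choice)
    have "ustar p (A 0) \<in> p" using ustar_in[OF u idem] A by blast
    then obtain d where "d \<in> ustar p (A 0)" using inf by (metis ex_in_conv finite.emptyI)
    moreover have "ustar p (A 0) \<subseteq> A 0" by (auto simp: ustar_def)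
    ultimately show "\<exists>x. P 0 x" using star_good A unfolding P_def by (intro exI[of _ "(d, ustar p (A 0))"]) auto
  next
    fix x n assume Px: "P n x"
    obtain d C where x: "x = (d, C)" by (cases x)
    have gC: "good C" and dC: "d \<in> C" using Px x by (auto simp: P_def)
    have "C \<inter> shiftn C d \<inter> A (Suc n) \<in> p"
      using gC dC A ultra_Int[OF u] unfolding good_def by blast
    then have C'p: "ustar p (C \<inter> shiftn C d \<inter> A (Suc n)) \<in> p" (is "?C' \<in> p")
      using ustar_in[OF u idem] by blast
    then have "infinite ?C'" using inf by blast
    then obtain d' where d': "d' \<in> ?C'" "d < d'" using infinite_nat_iff_unbounded by blast
    have sub: "?C' \<subseteq> C \<inter> shiftn C d \<inter> A (Suc n)" by (auto simp: ustar_def)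
    have "good ?C'" using star_good \<open>C \<inter> shiftn C d \<inter> A (Suc n) \<in> p\<close> by blast
    then have "P (Suc n) (d', ?C') \<and> Q n x (d', ?C')"
      using sub d' x unfolding P_def Q_def by auto
    then show "\<exists>y. P (Suc n) y \<and> Q n x y" by blast
  qed
  then obtain f where f: "\<forall>n. P n (f n) \<and> Q n (f n) (f (Suc n))" by blast
  define d where "d i = fst (f i)" for i
  define C where "C i = snd (f i)" for i
  have dC: "d i \<in> C i" and CA: "C i \<subseteq> A i" and Cdec: "C (Suc i) \<subseteq> C i"
    and Csh: "C (Suc i) \<subseteq> shiftn (C i) (d i)" and dinc: "d i < d (Suc i)" for i
    using f unfolding P_def Q_def d_def C_def by auto
  have smd: "strict_mono d" using dinc by (simp add: strict_mono_Suc_iff)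
  have Cmono: "C j \<subseteq> C k" if "k \<le> j" for j k
    using lift_Suc_antimono_le[of C, OF Cdec that] .
  have key: "\<forall>(a::nat set) k. card a = N \<longrightarrow> finite a \<longrightarrow> a \<noteq> {} \<longrightarrow> a \<subseteq> {k..} \<longrightarrow> (\<Sum>i\<in>a. d i) \<in> C k" for N
  proof (induction N)
    case 0 then show ?case by auto
  next
    case (Suc N)
    show ?case
    proof (intro allI impI)
      fix a :: "nat set" and k :: nat assume a: "card a = Suc N" "finite a" "a \<noteq> {}" "a \<subseteq> {k..}"
      define j where "j = Min a"
      have ja: "j \<in> a" using a by (simp add: j_def)
      have jk: "k \<le> j" using ja a by auto
      define b where "b = a - {j}"
      have sum_eq: "(\<Sum>i\<in>a. d i) = d j + (\<Sum>i\<in>b. d i)"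
        using a(2) ja by (simp add: b_def sum.remove)
      show "(\<Sum>i\<in>a. d i) \<in> C k"
      proof (cases "b = {}")
        case True
        then show ?thesis using sum_eq dC[of j] Cmono[OF jk] by auto
      next
        case False
        have "b \<subseteq> {Suc j..}"
        proof
          fix i assume "i \<in> b"
          then have "i \<in> a" "i \<noteq> j" by (auto simp: b_def)
          then have "j \<le> i" using a(2) by (simp add: j_def)
          then show "i \<in> {Suc j..}" using \<open>i \<noteq> j\<close> by auto
        qed
        moreover have "card b = N" "finite b" using a ja by (auto simp: b_def)
        ultimately have "(\<Sum>i\<in>b. d i) \<in> C (Suc j)" using Suc.IH False by blast
        then have "d j + (\<Sum>i\<in>b. d i) \<in> C j" using Csh[of j] by (auto simp: shiftn_def)
        then show ?thesis using sum_eq Cmono[OF jk] by auto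
      qed
    qed
  qed
  have injd: "inj d" using smd by (rule strict_mono_imp_inj_on)
  have "infinite (range d)" using injd by (rule range_inj_infinite)
  moreover have "\<exists>K. finite K \<and> FS (range d - K) \<subseteq> A m" for m
  proof (intro exI conjI)
    show "finite (d ` {..<m})" by simp
    show "FS (range d - d ` {..<m}) \<subseteq> A m"
    proof
      fix s assume "s \<in> FS (range d - d ` {..<m})"
      then obtain g where g: "g \<subseteq> range d - d ` {..<m}" "finite g" "g \<noteq> {}" "s = \<Sum>g"
        unfolding FS_def by blast
      define a where "a = d -` g"
      have ga: "g = d ` a" using g(1) by (auto simp: a_def)
      have fa: "finite a" unfolding a_def using g(2) injd by (simp add: finite_vimageI)
      have am: "a \<subseteq> {m..}"
      proof
        fix i assume "i \<in> a"
        then have "d i \<notin> d ` {..<m}" using g(1) by (auto simp: a_def)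
        then show "i \<in> {m..}" by auto
      qed
      have "s = (\<Sum>i\<in>a. d i)" using g(4) ga injd by (simp add: sum.reindex inj_on_def)
      moreover have "a \<noteq> {}" using g(3) ga by auto
      ultimately have "s \<in> C m" using key fa am by blast
      then show "s \<in> A m" using CA by blast
    qed
  qed
  ultimately show ?thesis by blast
qed




definition Pgood :: "(nat set \<Rightarrow> 'b set) \<Rightarrow> 'b set set \<Rightarrow> bool" where
  "Pgood \<rho> P \<longleftrightarrow> (\<forall>A B. A \<in> P \<longrightarrow> A \<subseteq> B \<longrightarrow> B \<in> P) \<and> (\<forall>A B. A \<union> B \<in> P \<longrightarrow> A \<in> P \<or> B \<in> P)
     \<and> (\<forall>A. (\<forall>m. A m \<in> P) \<longrightarrow> (\<forall>m. A (Suc m) \<subseteq> A m) \<longrightarrow>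
          (\<exists>F. infinite F \<and> (\<forall>m. \<exists>K. finite K \<and> \<rho> (F - K) \<subseteq> A m)))"

lemma Pgood_split_finite:
  assumes "Pgood \<rho> P" "finite Y"
  shows "B \<union> (\<Union>y\<in>Y. G y) \<in> P \<Longrightarrow> B \<in> P \<or> (\<exists>y\<in>Y. G y \<in> P)"
  using assms(2)
proof (induction Y arbitrary: B rule: finite_induct)
  case empty then show ?case by simp
next
  case (insert y Y)
  have "(B \<union> (\<Union>y\<in>Y. G y)) \<union> G y \<in> P" using insert.prems by (simp add: Un_ac)
  then have "B \<union> (\<Union>y\<in>Y. G y) \<in> P \<or> G y \<in> P" using assms(1) unfolding Pgood_def by blast
  then show ?case using insert.IH by blast
qed

lemma isolated_Lambda:
  fixes x :: "'b \<Rightarrow> 'a::metric_space" and \<rho> :: "nat set \<Rightarrow> 'b set"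
  assumes iso: "\<eta> isolated_in Gamma \<rho> x"
    and lc: "locally_compact_space (euclidean :: 'a topology)"
    and H: "\<And>F0. infinite F0 \<Longrightarrow> \<exists>P. Pgood \<rho> P \<and> \<rho> F0 \<in> P"
  shows "\<eta> \<in> Lambda \<rho> x"
proof -
  obtain W where W: "open W" "W \<inter> Gamma \<rho> x = {\<eta>}" and etaG: "\<eta> \<in> Gamma \<rho> x"
    using iso unfolding isolated_in_def by blast
  have "\<eta> \<in> W" using W by blast
  have "\<exists>U K. openin euclidean U \<and> compactin euclidean K \<and> \<eta> \<in> U \<and> U \<subseteq> K"
    using lc unfolding locally_compact_space_def by simp
  then obtain U0 K0 where UK0: "openin euclidean U0" "compactin euclidean K0" "\<eta> \<in> U0" "U0 \<subseteq> K0"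
    by blast
  have UK: "open U0" "compact K0" "\<eta> \<in> U0" "U0 \<subseteq> K0" using UK0 open_openin compactin_euclidean_iff by blast+
  obtain r where r: "r > 0" "cball \<eta> r \<subseteq> W" using W(1) \<open>\<eta> \<in> W\<close> open_contains_cball by blast
  define V where "V = U0 \<inter> ball \<eta> r"
  define Cc where "Cc = K0 \<inter> cball \<eta> r"
  have V: "open V" "\<eta> \<in> V" "V \<subseteq> Cc" using UK r by (auto simp: V_def Cc_def)
  have Cc: "compact Cc" "Cc \<subseteq> W" using UK r by (auto simp: Cc_def compact_Int_closed)
  obtain F0 where F0: "infinite F0" "\<rho> F0 \<subseteq> {s. x s \<in> V}"
    using etaG V unfolding Gamma_def by blast
  obtain P where P: "Pgood \<rho> P" "\<rho> F0 \<in> P" using H[OF F0(1)] by blast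
  have Pmono: "\<And>A B. A \<in> P \<Longrightarrow> A \<subseteq> B \<Longrightarrow> B \<in> P"
    and Plam: "\<And>A. (\<forall>m. A m \<in> P) \<Longrightarrow> (\<forall>m. A (Suc m) \<subseteq> A m) \<Longrightarrow>
          (\<exists>F. infinite F \<and> (\<forall>m. \<exists>K. finite K \<and> \<rho> (F - K) \<subseteq> A m))"
    using P(1) unfolding Pgood_def by blast+
  have VP: "{s. x s \<in> V} \<in> P" using Pmono[OF P(2) F0(2)] .
  have R: "B \<notin> P" if "\<not> (\<exists>F. infinite F \<and> \<rho> F \<subseteq> B)" for B
  proof
    assume "B \<in> P"
    then obtain F where F: "infinite F" "\<forall>m. \<exists>K. finite K \<and> \<rho> (F - K) \<subseteq> B"
      using Plam[of "\<lambda>m. B"] by blast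
    then obtain K where "finite K" "\<rho> (F - K) \<subseteq> B" by blast
    moreover have "infinite (F - K)" using F(1) \<open>finite K\<close> by (simp add: Diff_infinite_finite)
    ultimately show False using that by blast
  qed
  have inP: "{s. x s \<in> U} \<in> P" if U: "open U" "\<eta> \<in> U" for U
  proof -
    have "\<forall>y\<in>Cc - U. \<exists>N. open N \<and> y \<in> N \<and> \<not> (\<exists>F. infinite F \<and> \<rho> F \<subseteq> {s. x s \<in> N})"
    proof
      fix y assume y: "y \<in> Cc - U"
      then have "y \<in> W" "y \<noteq> \<eta>" using Cc U by auto
      then have "y \<notin> Gamma \<rho> x" using W(2) by blast
      then show "\<exists>N. open N \<and> y \<in> N \<and> \<not> (\<exists>F. infinite F \<and> \<rho> F \<subseteq> {s. x s \<in> N})"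
        unfolding Gamma_def by blast
    qed
    from bchoice[OF this] obtain N where N: "\<forall>y\<in>Cc - U. open (N y) \<and> y \<in> N y \<and> \<not> (\<exists>F. infinite F \<and> \<rho> F \<subseteq> {s. x s \<in> N y})"
      by blast
    have cpt: "compact (Cc - U)" using Cc(1) U(1) by (simp add: Diff_eq compact_Int_closed closed_Compl)
    have cov: "Cc - U \<subseteq> (\<Union>y\<in>Cc - U. N y)" using N by blast
    have opN: "\<And>y. y \<in> Cc - U \<Longrightarrow> open (N y)" using N by blast
    obtain Y where Y: "Y \<subseteq> Cc - U" "finite Y" "Cc - U \<subseteq> (\<Union>y\<in>Y. N y)"
      by (rule compactE_image[OF cpt opN cov])
    have "{s. x s \<in> V} \<subseteq> {s. x s \<in> U} \<union> (\<Union>y\<in>Y. {s. x s \<in> N y})"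
      using V(3) Y(3) by blast
    then have "{s. x s \<in> U} \<union> (\<Union>y\<in>Y. {s. x s \<in> N y}) \<in> P" using Pmono VP by blast
    then have "{s. x s \<in> U} \<in> P \<or> (\<exists>y\<in>Y. {s. x s \<in> N y} \<in> P)"
      using Pgood_split_finite[OF P(1) Y(2)] by blast
    moreover have "{s. x s \<in> N y} \<notin> P" if "y \<in> Y" for y
      using R N Y(1) that by blast
    ultimately show ?thesis by blast
  qed
  define A where "A m = {s. x s \<in> ball \<eta> (inverse (real (Suc m)))}" for m
  have AP: "\<forall>m. A m \<in> P"
  proof
    fix m
    show "A m \<in> P" unfolding A_def by (rule inP) simp_all
  qed
  have Adec: "\<forall>m. A (Suc m) \<subseteq> A m"
  proof
    fix m
    have "inverse (real (Suc (Suc m))) \<le> inverse (real (Suc m))" by (simp add: field_simps)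
    then have "ball \<eta> (inverse (real (Suc (Suc m)))) \<subseteq> ball \<eta> (inverse (real (Suc m)))"
      by (rule subset_ball)
    then show "A (Suc m) \<subseteq> A m" unfolding A_def by blast
  qed
  obtain F where F: "infinite F" "\<forall>m. \<exists>K. finite K \<and> \<rho> (F - K) \<subseteq> A m"
    using Plam[OF AP Adec] by blast
  show ?thesis
    unfolding Lambda_def
  proof (intro CollectI exI[of _ F] conjI)
    show "infinite F" by (rule F(1))
    show "\<forall>U. open U \<and> \<eta> \<in> U \<longrightarrow> (\<exists>K. finite K \<and> (\<forall>s\<in>\<rho> (F - K). x s \<in> U))"
    proof (intro allI impI)
    fix U assume U: "open U \<and> \<eta> \<in> U"
    then obtain e where e: "e > 0" "ball \<eta> e \<subseteq> U" using open_contains_ball by blast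
    obtain n where n: "n > 0" "inverse (real n) < e" using ex_inverse_of_nat_less[OF e(1)] by auto
    obtain m where m: "n = Suc m" using n(1) gr0_conv_Suc by blast
    obtain K where K: "finite K" "\<rho> (F - K) \<subseteq> A m" using F(2) by blast
    have "ball \<eta> (inverse (real (Suc m))) \<subseteq> U" using e n m by auto
    then show "\<exists>K. finite K \<and> (\<forall>s\<in>\<rho> (F - K). x s \<in> U)" using K unfolding A_def by blast
    qed
  qed
qed



lemma nonprincipal_exists:
  assumes inf: "infinite (F0::nat set)"
  shows "\<exists>p. ultra p \<and> F0 \<in> p \<and> (\<forall>A\<in>p. infinite A)"
proof -
  define D where "D k = F0 \<inter> {k..}" for k
  have fipD: "fip (range D)"
    unfolding fip_def
  proof (intro allI impI)
    fix H assume H: "finite H" "H \<subseteq> range D"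
    then obtain I where I: "finite I" "H = D ` I" using finite_subset_image[of H D UNIV] by auto
    obtain f where f: "f \<in> F0" "f \<ge> Max (insert 0 I)"
      using inf by (meson infinite_nat_iff_unbounded_le)
    have "f \<in> D k" if "k \<in> I" for k
    proof -
      have "k \<le> f" using f that I(1) by (meson Max_ge finite_insert insertI2 le_trans)
      then show ?thesis unfolding D_def using f by auto
    qed
    then have "f \<in> \<Inter>H" using I by auto
    then show "\<Inter>H \<noteq> {}" by blast
  qed
  obtain e where ue: "ultra e" and De: "range D \<subseteq> e" using ultra_exists[OF fipD] by blast
  have "F0 \<in> e" using De by (force simp: D_def)
  moreover have "infinite A" if "A \<in> e" for A
  proof
    assume "finite A"
    then obtain k where k: "A \<subseteq> {..<k}" using finite_nat_bounded by blast
    have "D k \<in> e" using De by blast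
    then have "A \<inter> D k \<in> e" using ultra_Int[OF ue that] by blast
    moreover have "A \<inter> D k = {}" using k by (auto simp: D_def)
    ultimately show False using ultra_empty[OF ue] by simp
  qed
  ultimately show ?thesis using ue by blast
qed



lemma pairs_Pgood:
  assumes inf: "infinite F0"
  shows "\<exists>P. Pgood pairs P \<and> pairs F0 \<in> P"
proof -
  obtain p where u: "ultra p" and F0p: "F0 \<in> p" and pinf: "\<forall>A\<in>p. infinite A"
    using nonprincipal_exists[OF inf] by blast
  have cof: "{k<..} \<in> p" for k
  proof -
    have "{..k} \<notin> p" using pinf by auto
    then have "- {..k} \<in> p" using ultra_compl[OF u] by blast
    moreover have "- {..k} = {k<..}" by auto
    ultimately show ?thesis by simp
  qed
  define P where "P = {A. {i. {j. {i,j} \<in> A} \<in> p} \<in> p}"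
  have mono: "B \<in> P" if "A \<in> P" "A \<subseteq> B" for A B
  proof -
    have "{i. {j. {i,j} \<in> A} \<in> p} \<subseteq> {i. {j. {i,j} \<in> B} \<in> p}"
    proof
      fix i assume "i \<in> {i. {j. {i,j} \<in> A} \<in> p}"
      moreover have "{j. {i,j} \<in> A} \<subseteq> {j. {i,j} \<in> B}" using that(2) by blast
      ultimately show "i \<in> {i. {j. {i,j} \<in> B} \<in> p}" using ultra_mono[OF u] by blast
    qed
    moreover have "{i. {j. {i,j} \<in> A} \<in> p} \<in> p" using that(1) by (simp add: P_def)
    ultimately have "{i. {j. {i,j} \<in> B} \<in> p} \<in> p" using ultra_mono[OF u] by blast
    then show ?thesis by (simp add: P_def)
  qed
  have split: "A \<in> P \<or> B \<in> P" if "A \<union> B \<in> P" for A B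
  proof -
    have "{i. {j. {i,j} \<in> A \<union> B} \<in> p} \<subseteq> {i. {j. {i,j} \<in> A} \<in> p} \<union> {i. {j. {i,j} \<in> B} \<in> p}"
    proof
      fix i assume "i \<in> {i. {j. {i,j} \<in> A \<union> B} \<in> p}"
      then have "{j. {i,j} \<in> A} \<union> {j. {i,j} \<in> B} \<in> p" by (simp add: Collect_disj_eq)
      then show "i \<in> {i. {j. {i,j} \<in> A} \<in> p} \<union> {i. {j. {i,j} \<in> B} \<in> p}" using ultra_Un[OF u] by blast
    qed
    moreover have "{i. {j. {i,j} \<in> A \<union> B} \<in> p} \<in> p" using that by (simp add: P_def)
    ultimately have "{i. {j. {i,j} \<in> A} \<in> p} \<union> {i. {j. {i,j} \<in> B} \<in> p} \<in> p"
      using ultra_mono[OF u] by blast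
    then have "{i. {j. {i,j} \<in> A} \<in> p} \<in> p \<or> {i. {j. {i,j} \<in> B} \<in> p} \<in> p"
      using ultra_Un[OF u] by blast
    then show ?thesis by (simp add: P_def)
  qed
  have F0P: "pairs F0 \<in> P"
  proof -
    have "F0 \<subseteq> {i. {j. {i,j} \<in> pairs F0} \<in> p}"
    proof
      fix i assume i: "i \<in> F0"
      have "{i} \<notin> p" using pinf by auto
      then have "- {i} \<in> p" using ultra_compl[OF u] by blast
      then have "F0 \<inter> - {i} \<in> p" using ultra_Int[OF u F0p] by blast
      moreover have "F0 \<inter> - {i} \<subseteq> {j. {i,j} \<in> pairs F0}" using i by (auto simp: pairs_def)
      ultimately show "i \<in> {i. {j. {i,j} \<in> pairs F0} \<in> p}" using ultra_mono[OF u] by blast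
    qed
    then show ?thesis using F0p ultra_mono[OF u] by (auto simp: P_def)
  qed
  have lam: "\<exists>F. infinite F \<and> (\<forall>m. \<exists>K. finite K \<and> pairs (F - K) \<subseteq> A m)"
    if A: "\<forall>m. A m \<in> P" and dec: "\<forall>m. A (Suc m) \<subseteq> A m" for A
  proof -
    have A': "{i. {j. {i,j} \<in> A m} \<in> p} \<in> p" for m using A by (simp add: P_def)
    define Pr where "Pr n y \<longleftrightarrow> snd y \<in> p \<and> (\<forall>j\<in>snd y. {fst y, j} \<in> A n \<and> fst y < j)"
      for n :: nat and y :: "nat \<times> nat set"
    define Qr where "Qr n y z \<longleftrightarrow> fst z \<in> snd y \<and> snd z \<subseteq> snd y"
      for n :: nat and y z :: "nat \<times> nat set"
    have "\<exists>f. \<forall>n. Pr n (f n) \<and> Qr n (f n) (f (Suc n))"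
    proof (rule dependent_nat_choice)
      have "{i. {j. {i,j} \<in> A 0} \<in> p} \<noteq> {}"
      proof
        assume "{i. {j. {i,j} \<in> A 0} \<in> p} = {}"
        then show False using A'[of 0] ultra_empty[OF u] by simp
      qed
      then obtain d where d: "{j. {d,j} \<in> A 0} \<in> p" by blast
      have "{j. {d,j} \<in> A 0} \<inter> {d<..} \<in> p" using ultra_Int[OF u d cof] .
      then show "\<exists>y. Pr 0 y" unfolding Pr_def by (intro exI[of _ "(d, {j. {d,j} \<in> A 0} \<inter> {d<..})"]) auto
    next
      fix y n assume Py: "Pr n y"
      obtain d S where y: "y = (d, S)" by (cases y)
      have "S \<inter> {i. {j. {i,j} \<in> A (Suc n)} \<in> p} \<in> p" using Py y ultra_Int[OF u _ A'] by (simp add: Pr_def)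
      then have "S \<inter> {i. {j. {i,j} \<in> A (Suc n)} \<in> p} \<noteq> {}"
        using ultra_empty[OF u] by (metis (no_types, lifting))
      then obtain d' where d': "d' \<in> S" "{j. {d',j} \<in> A (Suc n)} \<in> p" by blast
      define S' where "S' = S \<inter> {j. {d',j} \<in> A (Suc n)} \<inter> {d'<..}"
      have "S' \<in> p" unfolding S'_def using Py y d' cof ultra_Int[OF u] by (simp add: Pr_def)
      then have "Pr (Suc n) (d', S') \<and> Qr n y (d', S')" using y d' unfolding Pr_def Qr_def S'_def by auto
      then show "\<exists>z. Pr (Suc n) z \<and> Qr n y z" by blast
    qed
    then obtain f where f: "\<forall>n. Pr n (f n) \<and> Qr n (f n) (f (Suc n))" by blast
    define d where "d i = fst (f i)" for i
    define S where "S i = snd (f i)" for i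
    have Sprop: "\<forall>j\<in>S i. {d i, j} \<in> A i \<and> d i < j" and dS: "d (Suc i) \<in> S i"
      and Sdec: "S (Suc i) \<subseteq> S i" for i
      using f unfolding Pr_def Qr_def d_def S_def by auto
    have dinc: "d i < d (Suc i)" for i using Sprop dS by blast
    have smd: "strict_mono d" using dinc by (simp add: strict_mono_Suc_iff)
    have Smono: "S j \<subseteq> S k" if "k \<le> j" for j k using lift_Suc_antimono_le[of S, OF Sdec that] .
    have Amono: "A j \<subseteq> A k" if "k \<le> j" for j k using lift_Suc_antimono_le[of A, OF _ that] dec by blast
    have pair_in: "{d i, d j} \<in> A i" if ij: "i < j" for i j
    proof -
      obtain j' where j': "j = Suc j'" using ij by (cases j) auto
      have "d j \<in> S i" using dS[of j'] Smono[of i j'] ij j' by auto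
      then show ?thesis using Sprop by blast
    qed
    have injd: "inj d" using smd by (rule strict_mono_imp_inj_on)
    have "infinite (range d)" using injd by (rule range_inj_infinite)
    moreover have "\<exists>K. finite K \<and> pairs (range d - K) \<subseteq> A m" for m
    proof (intro exI conjI)
      show "finite (d ` {..<m})" by simp
      show "pairs (range d - d ` {..<m}) \<subseteq> A m"
      proof
        fix s assume "s \<in> pairs (range d - d ` {..<m})"
        then have s: "s \<subseteq> range d - d ` {..<m}" "card s = 2" by (auto simp: pairs_def)
        then obtain a b where ab: "s = {a,b}" "a \<noteq> b" by (auto simp: card_2_iff)
        have a: "a \<in> range d" "a \<notin> d ` {..<m}" and b: "b \<in> range d" "b \<notin> d ` {..<m}"
          using s(1) ab by auto
        obtain i where i: "a = d i" using a(1) by blast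
        obtain j where j: "b = d j" using b(1) by blast
        have "m \<le> i" using a(2) i by (metis imageI lessThan_iff not_le)
        moreover have "m \<le> j" using b(2) j by (metis imageI lessThan_iff not_le)
        ultimately have ij: "a = d i" "b = d j" "m \<le> i" "m \<le> j" using i j by auto
        then have "i \<noteq> j" using ab by auto
        show "s \<in> A m"
        proof (cases "i < j")
          case True then show ?thesis using pair_in[OF True] Amono[OF ij(3)] ab ij by auto
        next
          case False then have "j < i" using \<open>i \<noteq> j\<close> by auto
          then show ?thesis using pair_in[of j i] Amono[OF ij(4)] ab ij by (auto simp: insert_commute)
        qed
      qed
    qed
    ultimately show ?thesis by blast
  qed
  have "Pgood pairs P" unfolding Pgood_def using mono split lam by blast
  then show ?thesis using F0P by blast
qed



lemma FS_Pgood: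
  assumes inf: "infinite F0"
  shows "\<exists>P. Pgood FS P \<and> FS F0 \<in> P"
proof -
  obtain p where u: "ultra p" and idem: "upl p p = p" and F0p: "FS F0 \<in> p" and pinf: "\<forall>A\<in>p. infinite A"
    using idem_exists[OF inf] by blast
  have "Pgood FS p"
    unfolding Pgood_def using ultra_mono[OF u] ultra_Un[OF u] galvin_glazer[OF u idem pinf] by blast
  then show ?thesis using F0p by blast
qed




lemma seq_exists:
  fixes p :: "'a::metric_space"
  assumes "p islimpt (UNIV :: 'a set)"
  shows "\<exists>(y::nat \<Rightarrow> 'a) z r. r > 0 \<and> dist z p = r \<and> (\<forall>n. y n \<noteq> p \<and> dist (y n) p < r / 2)
           \<and> (\<forall>e>0. \<exists>n. dist (y n) p < e)"
proof -
  obtain z where z: "z \<noteq> p" using assms unfolding islimpt_approachable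
    by (metis zero_less_one)
  define r where "r = dist z p"
  have r: "r > 0" using z by (simp add: r_def)
  have "\<forall>n. \<exists>y. y \<noteq> p \<and> dist y p < r / real (n + 2)"
  proof
    fix n
    have "r / real (n + 2) > 0" using r by simp
    then show "\<exists>y. y \<noteq> p \<and> dist y p < r / real (n + 2)"
      using assms unfolding islimpt_approachable by blast
  qed
  then obtain y where y: "\<forall>n. y n \<noteq> p \<and> dist (y n) p < r / real (n + 2)" by metis
  have "r / real (n + 2) \<le> r / 2" for n using r by (intro divide_left_mono) auto
  then have y2: "\<forall>n. y n \<noteq> p \<and> dist (y n) p < r / 2"
    using y less_le_trans by blast
  have "\<exists>n. dist (y n) p < e" if e: "e > 0" for e
  proof -
    obtain n where n: "r / e < real n" using reals_Archimedean2 by blast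
    have "r < e * real n" using n e by (simp add: field_simps)
    also have "\<dots> \<le> e * real (n + 2)" using e by simp
    finally have "r / real (n + 2) < e" by (simp add: field_simps)
    then show ?thesis using y by (meson less_trans)
  qed
  then show ?thesis using r y2 r_def by blast
qed

definition cls :: "nat \<Rightarrow> nat" where "cls i = fst (prod_decode i)"

lemma cls_infinite: "infinite {i. cls i = n}"
proof -
  have "range (\<lambda>k. prod_encode (n, k)) \<subseteq> {i. cls i = n}" by (auto simp: cls_def)
  moreover have "infinite (range (\<lambda>k. prod_encode (n, k)))"
    by (rule range_inj_infinite) (simp add: inj_on_def inj_prod_encode[THEN inj_onD])
  ultimately show ?thesis using infinite_super by blast
qed

lemma FS_E: "s \<in> FS D \<Longrightarrow> \<exists>g. g \<subseteq> D \<and> finite g \<and> g \<noteq> {} \<and> s = \<Sum>g"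
  unfolding FS_def by blast

lemma pairs_example:
  fixes p z :: "'a::metric_space" and y :: "nat \<Rightarrow> 'a"
  assumes r: "r > 0" "dist z p = r" and y: "\<forall>n. y n \<noteq> p \<and> dist (y n) p < r / 2"
    and app: "\<forall>e>0. \<exists>n. dist (y n) p < e"
  shows "\<exists>x :: nat set \<Rightarrow> 'a. p \<in> Gamma pairs x \<and> p \<notin> Lambda pairs x \<and> (\<forall>n. y n \<in> Lambda pairs x)"
proof -
  define x where "x s = (if s \<noteq> {} \<and> (\<forall>i\<in>s. cls i = cls (Min s)) then y (cls (Min s)) else z)" for s
  let ?E = "\<lambda>n. {i. cls i = n}"
  have xE: "x s = y n" if "s \<in> pairs (?E n)" for s n
  proof -
    have s: "s \<subseteq> ?E n" "card s = 2" using that by (auto simp: pairs_def)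
    then have "finite s" "s \<noteq> {}" by (auto intro: card_ge_0_finite)
    then have "Min s \<in> s" by simp
    moreover have all: "\<forall>i\<in>s. cls i = n" using s(1) by blast
    ultimately have "cls (Min s) = n" by blast
    then have "s \<noteq> {} \<and> (\<forall>i\<in>s. cls i = cls (Min s))" using all \<open>s \<noteq> {}\<close> by simp
    then show ?thesis using \<open>cls (Min s) = n\<close> by (simp add: x_def)
  qed
  have yL: "y n \<in> Lambda pairs x" for n
  proof -
    have "infinite (?E n)" using cls_infinite by blast
    moreover have "\<forall>U. open U \<and> y n \<in> U \<longrightarrow> (\<exists>K. finite K \<and> (\<forall>s\<in>pairs (?E n - K). x s \<in> U))"
    proof (intro allI impI)
      fix U assume "open U \<and> y n \<in> U"
      then show "\<exists>K. finite K \<and> (\<forall>s\<in>pairs (?E n - K). x s \<in> U)"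
        by (intro exI[of _ "{}"]) (simp add: xE)
    qed
    ultimately show ?thesis unfolding Lambda_def by blast
  qed
  have pG: "p \<in> Gamma pairs x"
    unfolding Gamma_def
  proof (intro CollectI allI impI)
    fix U assume U: "open U \<and> p \<in> U"
    then obtain e where e: "e > 0" "ball p e \<subseteq> U" using open_contains_ball by blast
    then obtain n where "dist (y n) p < e" using app by blast
    then have "y n \<in> U" using e by (auto simp: dist_commute)
    then have "pairs (?E n) \<subseteq> {s. x s \<in> U}" using xE by auto
    moreover have "infinite (?E n)" using cls_infinite by blast
    ultimately show "\<exists>F. infinite F \<and> pairs F \<subseteq> {s. x s \<in> U}" by blast
  qed
  have two: "cls a = cls b \<and> x {a,b} = y (cls a)" if "a \<noteq> b" "x {a,b} \<noteq> z" for a b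
  proof -
    have g: "\<forall>i\<in>{a,b}. cls i = cls (Min {a,b})" and xv: "x {a,b} = y (cls (Min {a,b}))"
      using that(2) unfolding x_def by (auto split: if_splits)
    then have "cls a = cls b" by simp
    moreover have "Min {a,b} \<in> {a,b}" by (rule Min_in) auto
    ultimately show ?thesis using g xv by auto
  qed
  have pinpairs: "{a,b} \<in> pairs S" if "a \<in> S" "b \<in> S" "a \<noteq> b" for a b S
    using that by (auto simp: pairs_def)
  have pL: "p \<notin> Lambda pairs x"
  proof
    assume "p \<in> Lambda pairs x"
    then obtain F where F: "infinite F"
      and H: "\<forall>U. open U \<and> p \<in> U \<longrightarrow> (\<exists>K. finite K \<and> (\<forall>s\<in>pairs (F - K). x s \<in> U))"
      unfolding Lambda_def by blast
    obtain K1 where K1: "finite K1" "\<forall>s\<in>pairs (F - K1). x s \<in> ball p (r/2)"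
      using H[rule_format, of "ball p (r/2)"] r by auto
    have zn: "z \<notin> ball p (r/2)" using r by (simp add: dist_commute)
    have inf1: "infinite (F - K1)" using F K1 by (simp add: Diff_infinite_finite)
    then obtain a where a: "a \<in> F - K1" by (metis finite.emptyI ex_in_conv)
    define n where "n = cls a"
    have "dist (y n) p > 0" using y by simp
    then obtain K2 where K2: "finite K2" "\<forall>s\<in>pairs (F - K2). x s \<in> ball p (dist (y n) p)"
      using H[rule_format, of "ball p (dist (y n) p)"] by auto
    have "infinite (F - K1 - K2 - {a})" using inf1 K2 by (simp add: Diff_infinite_finite)
    then obtain b where b: "b \<in> F - K1 - K2 - {a}" by (metis finite.emptyI ex_in_conv)
    have "infinite (F - K1 - K2 - {a, b})" using inf1 K2 by (simp add: Diff_infinite_finite)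
    then obtain c where c: "c \<in> F - K1 - K2 - {a, b}" by (metis finite.emptyI ex_in_conv)
    have "x {a,b} \<noteq> z" using K1(2) pinpairs[of a "F - K1" b] a b zn by force
    then have "cls b = n" using two[of a b] a b n_def by auto
    have "x {b,c} \<noteq> z" using K1(2) pinpairs[of b "F - K1" c] b c zn by force
    then have bc: "cls b = cls c" "x {b,c} = y (cls b)" using two[of b c] b c by auto
    have "x {b,c} \<in> ball p (dist (y n) p)" using K2(2) pinpairs[of b "F - K2" c] b c by force
    then show False using bc \<open>cls b = n\<close> by (simp add: dist_commute)
  qed
  show ?thesis using pG pL yL by blast
qed

lemma FS_example:
  fixes p z :: "'a::metric_space" and y :: "nat \<Rightarrow> 'a"
  assumes r: "r > 0" "dist z p = r" and y: "\<forall>n. y n \<noteq> p \<and> dist (y n) p < r / 2"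
    and app: "\<forall>e>0. \<exists>n. dist (y n) p < e"
  shows "\<exists>x :: nat \<Rightarrow> 'a. p \<in> Gamma FS x \<and> p \<notin> Lambda FS x \<and> (\<forall>n. y n \<in> Lambda FS x)"
proof -
  define good where "good s \<longleftrightarrow> s \<noteq> 0 \<and> (\<forall>i\<in>set_decode s. cls i = cls (Min (set_decode s)))" for s
  define c where "c s = cls (Min (set_decode s))" for s
  define x where "x s = (if good s then y (c s) else z)" for s
  let ?B = "\<lambda>n. (\<lambda>i. (2::nat) ^ i) ` {i. cls i = n}"
  have inj2: "inj (\<lambda>i. (2::nat) ^ i)" by (simp add: inj_on_def)
  have Binf: "infinite (?B n)" for n
    using cls_infinite inj2 by (simp add: finite_image_iff inj_on_subset)
  have xB: "x s = y n" if "s \<in> FS (?B n)" for s n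
  proof -
    from FS_E[OF that] obtain g where g: "g \<subseteq> ?B n" "finite g" "g \<noteq> {}" "s = \<Sum>g" by blast
    define a where "a = {i. cls i = n \<and> 2 ^ i \<in> g}"
    have ga: "g = (\<lambda>i. (2::nat) ^ i) ` a" using g(1) by (auto simp: a_def)
    have fa: "finite a" using g(2) ga inj2 by (simp add: finite_image_iff inj_on_subset)
    have "s = set_encode a" using g(4) ga inj2 by (simp add: set_encode_def sum.reindex inj_on_subset)
    then have sd: "set_decode s = a" using fa by simp
    have ane: "a \<noteq> {}" using g(3) ga by auto
    have "s \<noteq> 0" using sd ane by auto
    moreover have "Min a \<in> a" using fa ane by simp
    ultimately have "good s" "c s = n" unfolding good_def c_def sd by (auto simp: a_def)
    then show ?thesis by (simp add: x_def)
  qed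
  have yL: "y n \<in> Lambda FS x" for n
  proof -
    have "infinite (?B n)" using Binf by blast
    moreover have "\<forall>U. open U \<and> y n \<in> U \<longrightarrow> (\<exists>K. finite K \<and> (\<forall>s\<in>FS (?B n - K). x s \<in> U))"
    proof (intro allI impI)
      fix U assume "open U \<and> y n \<in> U"
      then show "\<exists>K. finite K \<and> (\<forall>s\<in>FS (?B n - K). x s \<in> U)"
        by (intro exI[of _ "{}"]) (simp add: xB)
    qed
    ultimately show ?thesis unfolding Lambda_def by blast
  qed
  have pG: "p \<in> Gamma FS x"
    unfolding Gamma_def
  proof (intro CollectI allI impI)
    fix U assume U: "open U \<and> p \<in> U"
    then obtain e where e: "e > 0" "ball p e \<subseteq> U" using open_contains_ball by blast
    then obtain n where "dist (y n) p < e" using app by blast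
    then have "y n \<in> U" using e by (auto simp: dist_commute)
    then have "FS (?B n) \<subseteq> {s. x s \<in> U}" using xB by auto
    moreover have "infinite (?B n)" using Binf by blast
    ultimately show "\<exists>F. infinite F \<and> FS F \<subseteq> {s. x s \<in> U}" by blast
  qed
  have FS1: "a \<in> FS S" if "a \<in> S" for a S using that by (rule FS_elem)
  have FS2: "a + b \<in> FS S" if "a \<in> S" "b \<in> S" "a \<noteq> b" for a b S
    unfolding FS_def using that by (intro CollectI exI[of _ "{a,b}"]) auto
  have same: "c a = c b" if ga: "good a" and gb: "good b" and gab: "good (a + b)" for a b
  proof (rule ccontr)
    assume ne: "c a \<noteq> c b"
    let ?Da = "set_decode a" and ?Db = "set_decode b"
    have ca: "\<forall>i\<in>?Da. cls i = c a" and cb: "\<forall>i\<in>?Db. cls i = c b"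
      using ga gb by (auto simp: good_def c_def)
    have dis: "?Da \<inter> ?Db = {}" using ca cb ne by force
    have "set_encode (?Da \<union> ?Db) = set_encode ?Da + set_encode ?Db"
      unfolding set_encode_def by (rule sum.union_disjoint) (simp_all add: dis)
    then have "a + b = set_encode (?Da \<union> ?Db)" by simp
    then have dab: "set_decode (a + b) = ?Da \<union> ?Db" by simp
    have "?Da \<noteq> {}" using ga by (metis good_def set_decode_inverse set_encode_empty)
    then obtain i where i: "i \<in> ?Da" by blast
    have "?Db \<noteq> {}" using gb by (metis good_def set_decode_inverse set_encode_empty)
    then obtain j where j: "j \<in> ?Db" by blast
    have "cls i = cls j" using gab dab i j unfolding good_def by auto
    then show False using ca cb i j ne by auto
  qed
  have pL: "p \<notin> Lambda FS x"
  proof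
    assume "p \<in> Lambda FS x"
    then obtain F where F: "infinite F"
      and H: "\<forall>U. open U \<and> p \<in> U \<longrightarrow> (\<exists>K. finite K \<and> (\<forall>s\<in>FS (F - K). x s \<in> U))"
      unfolding Lambda_def by blast
    obtain K1 where K1: "finite K1" "\<forall>s\<in>FS (F - K1). x s \<in> ball p (r/2)"
      using H[rule_format, of "ball p (r/2)"] r by auto
    have zn: "z \<notin> ball p (r/2)" using r by (simp add: dist_commute)
    have gd: "good s" if "s \<in> FS (F - K1)" for s
      using K1(2) that zn unfolding x_def by (metis (full_types))
    have inf1: "infinite (F - K1)" using F K1 by (simp add: Diff_infinite_finite)
    then obtain a where a: "a \<in> F - K1" by (metis finite.emptyI ex_in_conv)
    define n where "n = c a"
    have "dist (y n) p > 0" using y by simp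
    then obtain K2 where K2: "finite K2" "\<forall>s\<in>FS (F - K2). x s \<in> ball p (dist (y n) p)"
      using H[rule_format, of "ball p (dist (y n) p)"] by auto
    have "infinite (F - K1 - K2 - {a})" using inf1 K2 by (simp add: Diff_infinite_finite)
    then obtain b where b: "b \<in> F - K1 - K2 - {a}" by (metis finite.emptyI ex_in_conv)
    have "good a" "good b" "good (a + b)" using gd FS1 FS2[of a "F - K1" b] a b by auto
    then have "c b = n" using same n_def by auto
    then have xb: "x b = y n" using \<open>good b\<close> by (simp add: x_def)
    have "x b \<in> ball p (dist (y n) p)" using K2(2) FS1[of b "F - K2"] b by blast
    then show False using xb by (simp add: dist_commute)
  qed
  show ?thesis using pG pL yL by blast
qed

theorem corollary3p4:
  fixes p :: "'a::metric_space"
  assumes "p islimpt (UNIV :: 'a set)"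
  shows "(\<exists>x :: nat set \<Rightarrow> 'a. Lambda pairs x \<noteq> Gamma pairs x)
       \<and> (\<exists>x :: nat set \<Rightarrow> 'a. \<not> closed (Lambda pairs x))
       \<and> (locally_compact_space (euclidean :: 'a topology) \<longrightarrow>
            (\<forall>x :: nat set \<Rightarrow> 'a. \<forall>\<eta>. \<eta> isolated_in Gamma pairs x \<longrightarrow> \<eta> \<in> Lambda pairs x))
       \<and> (\<exists>x :: nat \<Rightarrow> 'a. Lambda FS x \<noteq> Gamma FS x)
       \<and> (\<exists>x :: nat \<Rightarrow> 'a. \<not> closed (Lambda FS x))
       \<and> (locally_compact_space (euclidean :: 'a topology) \<longrightarrow>
            (\<forall>x :: nat \<Rightarrow> 'a. \<forall>\<eta>. \<eta> isolated_in Gamma FS x \<longrightarrow> \<eta> \<in> Lambda FS x))"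
proof -
  obtain y :: "nat \<Rightarrow> 'a" and z r where r: "r > 0" "dist z p = r"
    and y: "\<forall>n. y n \<noteq> p \<and> dist (y n) p < r / 2" and app: "\<forall>e>0. \<exists>n. dist (y n) p < e"
    using seq_exists[OF assms] by blast
  have notclosed: "\<not> closed L" if "p \<notin> L" "\<forall>n. y n \<in> L" for L
  proof
    assume "closed L"
    moreover have "p islimpt L" unfolding islimpt_approachable using that y app by blast
    ultimately show False using that(1) closed_limpt by blast
  qed
  obtain xp :: "nat set \<Rightarrow> 'a" where xp: "p \<in> Gamma pairs xp" "p \<notin> Lambda pairs xp" "\<forall>n. y n \<in> Lambda pairs xp"
    using pairs_example[OF r y app] by blast
  obtain xf :: "nat \<Rightarrow> 'a" where xf: "p \<in> Gamma FS xf" "p \<notin> Lambda FS xf" "\<forall>n. y n \<in> Lambda FS xf"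
    using FS_example[OF r y app] by blast
  have i: "\<exists>x :: nat set \<Rightarrow> 'a. Lambda pairs x \<noteq> Gamma pairs x" using xp by blast
  have ii: "\<exists>x :: nat set \<Rightarrow> 'a. \<not> closed (Lambda pairs x)" using xp notclosed by blast
  have i': "\<exists>x :: nat \<Rightarrow> 'a. Lambda FS x \<noteq> Gamma FS x" using xf by blast
  have ii': "\<exists>x :: nat \<Rightarrow> 'a. \<not> closed (Lambda FS x)" using xf notclosed by blast
  have iii: "locally_compact_space (euclidean :: 'a topology) \<longrightarrow>
            (\<forall>x :: nat set \<Rightarrow> 'a. \<forall>\<eta>. \<eta> isolated_in Gamma pairs x \<longrightarrow> \<eta> \<in> Lambda pairs x)"
    using isolated_Lambda pairs_Pgood by blast
  have iii': "locally_compact_space (euclidean :: 'a topology) \<longrightarrow>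
            (\<forall>x :: nat \<Rightarrow> 'a. \<forall>\<eta>. \<eta> isolated_in Gamma FS x \<longrightarrow> \<eta> \<in> Lambda FS x)"
    using isolated_Lambda FS_Pgood by blast
  show ?thesis using i ii iii i' ii' iii' by blast
qed


end
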